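(* For any $a,b,c,d\in\{0,1,2,3\}$, the set $\{\ket{\psi_{a0}},\ket{\psi_{b1}},\ket{\psi_{c2}},\ket{\psi_{d3}}\}$ of generalized Bell states in $\mathbb{C}^4\otimes\mathbb{C}^4$ can be perfectly discriminated by one-way LOCC using only projective measurements. Similarly, for any $a,b,c,d\in\{0,1,2,3\}$, the set $\{\ket{\psi_{0a}},\ket{\psi_{1b}},\ket{\psi_{2c}},\ket{\psi_{3d}}\}$ can be perfectly discriminated by one-way LOCC using only projective measurements.
   Context: Generalized Bell states in $\mathbb{C}^4\otimes\mathbb{C}^4$ (Alice holds the first factor, Bob the second): $\ket{\psi_{nm}}=\frac12\sum_{j=0}^{3}e^{2\pi i jn/4}\ket{j}_A\ket{j\oplus_4 m}_B$ for $n,m\in\{0,1,2,3\}$, where $j\oplus_4 m=(j+m)\bmod 4$ and $\{\ket{j}\}$ are standard bases. Perfect discrimination by one-way LOCC using only projective measurements means: one party performs a projective measurement on her subsystem, communicates the outcome classically, and the other party then performs a projective measurement (depending on that outcome) whose result identifies with certainty which state of the set was shared. *)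

theory Defs
  imports Complex_Main
begin

text \<open>Operators on \<open>C^4\<close> are represented as \<open>nat \<Rightarrow> nat \<Rightarrow> complex\<close>
  (only entries with indices < 4 matter).  A vector of \<open>C^4 \<otimes> C^4\<close> is
  \<open>nat \<Rightarrow> nat \<Rightarrow> complex\<close>, where \<open>v j k\<close> is the coefficient of \<open>|j>_A |k>_B\<close>.\<close>

type_synonym cmat4 = "nat \<Rightarrow> nat \<Rightarrow> complex"
type_synonym bivec = "nat \<Rightarrow> nat \<Rightarrow> complex"

definition mmul4 :: "cmat4 \<Rightarrow> cmat4 \<Rightarrow> cmat4" where
  "mmul4 A B = (\<lambda>i k. \<Sum>j<4. A i j * B j k)"

definition is_projector4 :: "cmat4 \<Rightarrow> bool" where
  "is_projector4 P \<longleftrightarrow>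
     (\<forall>i<4. \<forall>j<4. P j i = cnj (P i j)) \<and>
     (\<forall>i<4. \<forall>k<4. mmul4 P P i k = P i k)"

definition proj_meas4 :: "nat set \<Rightarrow> (nat \<Rightarrow> cmat4) \<Rightarrow> bool" where
  "proj_meas4 I P \<longleftrightarrow> finite I \<and> (\<forall>x\<in>I. is_projector4 (P x)) \<and>
     (\<forall>i<4. \<forall>k<4. (\<Sum>x\<in>I. P x i k) = (if i = k then 1 else 0))"

text \<open>Expectation \<open><v| PA \<otimes> PB |v>\<close> (outcome probability for a local product measurement).\<close>
definition prob_AB :: "cmat4 \<Rightarrow> cmat4 \<Rightarrow> bivec \<Rightarrow> complex" where
  "prob_AB PA PB v = (\<Sum>j<4. \<Sum>k<4. \<Sum>j'<4. \<Sum>k'<4.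
      cnj (v j k) * PA j j' * PB k k' * v j' k')"

definition oneway_A_to_B :: "bivec set \<Rightarrow> bool" where
  "oneway_A_to_B S \<longleftrightarrow> (\<exists>I P. proj_meas4 I P \<and> (\<forall>x\<in>I. \<exists>J Q. proj_meas4 J Q \<and>
      (\<forall>y\<in>J. \<forall>u\<in>S. \<forall>w\<in>S.
         prob_AB (P x) (Q y) u \<noteq> 0 \<longrightarrow> prob_AB (P x) (Q y) w \<noteq> 0 \<longrightarrow> u = w)))"

definition oneway_B_to_A :: "bivec set \<Rightarrow> bool" where
  "oneway_B_to_A S \<longleftrightarrow> (\<exists>I P. proj_meas4 I P \<and> (\<forall>x\<in>I. \<exists>J Q. proj_meas4 J Q \<and>
      (\<forall>y\<in>J. \<forall>u\<in>S. \<forall>w\<in>S.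
         prob_AB (Q y) (P x) u \<noteq> 0 \<longrightarrow> prob_AB (Q y) (P x) w \<noteq> 0 \<longrightarrow> u = w)))"

definition oneway_proj_LOCC_discr :: "bivec set \<Rightarrow> bool" where
  "oneway_proj_LOCC_discr S \<longleftrightarrow> oneway_A_to_B S \<or> oneway_B_to_A S"

definition bell :: "nat \<Rightarrow> nat \<Rightarrow> bivec" where
  "bell n m = (\<lambda>j k. if j < 4 \<and> k = (j + m) mod 4
      then exp (2 * pi * \<i> * of_nat (j * n) / 4) / 2 else 0)"

end

theory Submission imports Defs begin

definition w :: "nat \<Rightarrow> complex" where
  "w n = (if n mod 4 = 0 then 1 else if n mod 4 = 1 then \<i> else if n mod 4 = 2 then -1 else -\<i>)"

lemma i4: "\<i> ^ 4 = 1"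
  using i_even_power[of 2] by simp

lemma ipow_w: "\<i> ^ n = w n"
proof -
  have "\<i> ^ n = \<i> ^ (4 * (n div 4) + n mod 4)" by simp
  also have "\<dots> = (\<i>^4) ^ (n div 4) * \<i> ^ (n mod 4)" by (simp only: power_add power_mult)
  also have "\<dots> = \<i> ^ (n mod 4)" by (simp add: i4)
  finally have e: "\<i> ^ n = \<i> ^ (n mod 4)" .
  have "n mod 4 < 4" by simp
  then consider "n mod 4 = 0" | "n mod 4 = 1" | "n mod 4 = 2" | "n mod 4 = 3" by linarith
  then show ?thesis unfolding e w_def
    by cases (simp_all add: power3_eq_cube)
qed

lemma exp_w: "exp (2 * pi * \<i> * of_nat k / 4) = w k"
proof -
  have h: "2 * pi * \<i> * of_nat k / 4 = of_nat k * (\<i> * of_real (pi/2))" by (simp add: field_simps)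
  have "exp (\<i> * of_real (pi/2)) = \<i>" using cis_pi_half cis_conv_exp by metis
  then show ?thesis unfolding h exp_of_nat_mult by (simp add: ipow_w)
qed

lemma all4: "(\<forall>i<(4::nat). P i) \<longleftrightarrow> P 0 \<and> P 1 \<and> P 2 \<and> P 3"
  by (auto simp: less_Suc_eq numeral_eq_Suc)

lemma sum4: "(\<Sum>j<(4::nat). f j) = f 0 + f 1 + f 2 + f 3"
  by (simp add: numeral_eq_Suc)

lemma bell_w: "bell n m = (\<lambda>j k. if j < 4 \<and> k = (j + m) mod 4 then w (j * n) / 2 else 0)"
  unfolding bell_def by (simp only: exp_w)

definition proj :: "(nat \<Rightarrow> complex) \<Rightarrow> cmat4" where
  "proj \<alpha> = (\<lambda>j j'. \<alpha> j * cnj (\<alpha> j'))"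

definition amp :: "(nat \<Rightarrow> complex) \<Rightarrow> (nat \<Rightarrow> complex) \<Rightarrow> bivec \<Rightarrow> complex" where
  "amp \<alpha> \<beta> v = (\<Sum>j<4. \<Sum>k<4. cnj (\<alpha> j) * cnj (\<beta> k) * v j k)"

lemma sum_prod4: "(\<Sum>j<(4::nat). \<Sum>k<(4::nat). \<Sum>j'<(4::nat). \<Sum>k'<(4::nat). (a j k :: complex) * b j' k') =
   (\<Sum>j<4. \<Sum>k<4. a j k) * (\<Sum>j'<4. \<Sum>k'<4. b j' k')"
  by (simp only: sum_distrib_right, simp only: sum_distrib_left)

lemma prob_proj: "prob_AB (proj \<alpha>) (proj \<beta>) v = cnj (amp \<alpha> \<beta> v) * amp \<alpha> \<beta> v"
proof -
  have "prob_AB (proj \<alpha>) (proj \<beta>) v = (\<Sum>j<4. \<Sum>k<4. \<Sum>j'<4. \<Sum>k'<4.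
     (cnj (v j k) * \<alpha> j * \<beta> k) * (cnj (\<alpha> j') * cnj (\<beta> k') * v j' k'))"
    unfolding prob_AB_def proj_def by (simp add: mult_ac)
  also have "\<dots> = cnj (amp \<alpha> \<beta> v) * amp \<alpha> \<beta> v"
    unfolding sum_prod4 amp_def by (simp add: mult_ac)
  finally show ?thesis .
qed

lemma prob_proj_nz: "prob_AB (proj \<alpha>) (proj \<beta>) v \<noteq> 0 \<Longrightarrow> amp \<alpha> \<beta> v \<noteq> 0"
  by (auto simp: prob_proj)

lemma proj_projector:
  assumes "(\<Sum>j<4. cnj (\<alpha> j) * \<alpha> j) = 1"
  shows "is_projector4 (proj \<alpha>)"
proof -
  have "mmul4 (proj \<alpha>) (proj \<alpha>) i k = proj \<alpha> i k" for i k
  proof -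
    have "mmul4 (proj \<alpha>) (proj \<alpha>) i k = \<alpha> i * cnj (\<alpha> k) * (\<Sum>j<4. cnj (\<alpha> j) * \<alpha> j)"
      unfolding mmul4_def proj_def by (simp add: sum_distrib_left mult_ac)
    then show ?thesis using assms by (simp add: proj_def)
  qed
  then show ?thesis unfolding is_projector4_def proj_def by simp
qed

lemma proj_meas:
  assumes "\<And>x. x < 4 \<Longrightarrow> (\<Sum>j<4. cnj (f x j) * f x j) = 1"
    and "\<And>i k. i < 4 \<Longrightarrow> k < 4 \<Longrightarrow> (\<Sum>x<4. f x i * cnj (f x k)) = (if i = k then 1 else 0)"
  shows "proj_meas4 {..<4} (\<lambda>x. proj (f x))"
  unfolding proj_meas4_def using assms proj_projector by (auto simp: proj_def)

definition e :: "nat \<Rightarrow> nat \<Rightarrow> complex" where "e x j = (if j = x then 1 else 0)"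
definition fv :: "nat \<Rightarrow> nat \<Rightarrow> complex" where "fv y j = w (y * j) / 2"

lemma e_meas: "proj_meas4 {..<4} (\<lambda>x. proj (e x))"
  by (rule proj_meas) (auto simp: e_def sum4 all4)

lemma less4: "(x::nat) < 4 \<Longrightarrow> x = 0 \<or> x = 1 \<or> x = 2 \<or> x = 3" by linarith

lemma fv_norm: "x < 4 \<Longrightarrow> (\<Sum>j<4. cnj (fv x j) * fv x j) = 1"
  apply (drule less4)
  apply (elim disjE)
  apply (simp_all add: sum4 fv_def w_def)
  done

lemma fv_compl: "i < 4 \<Longrightarrow> k < 4 \<Longrightarrow> (\<Sum>x<4. fv x i * cnj (fv x k)) = (if i = k then 1 else 0)"
  apply (drule less4)+
  apply (elim disjE)
  apply (simp_all add: sum4 fv_def w_def)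
  done
lemma amp_e: "z < 4 \<Longrightarrow> y < 4 \<Longrightarrow> amp (e z) (e y) v = v z y"
  apply (drule less4)+
  apply (elim disjE)
  apply (simp_all add: sum4 amp_def e_def)
  done

lemma amp_e_nz: "z < 4 \<Longrightarrow> y < 4 \<Longrightarrow> amp (e z) (e y) (bell n m) \<noteq> 0 \<Longrightarrow> y = (z + m) mod 4"
  by (simp add: amp_e bell_def split: if_splits)

lemma amp_fv_nz: "n < 4 \<Longrightarrow> m < 4 \<Longrightarrow> z < 4 \<Longrightarrow> y < 4 \<Longrightarrow>
   amp (fv z) (fv y) (bell n m) \<noteq> 0 \<Longrightarrow> (z + y) mod 4 = n"
  apply (drule less4)+
  apply (elim disjE)
  apply (simp_all add: sum4 fv_def w_def amp_def bell_w)
  done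
lemma modcancel: "(m::nat) < 4 \<Longrightarrow> m' < 4 \<Longrightarrow> (x + m) mod 4 = (x + m') mod 4 \<Longrightarrow> m = m'"
proof -
  assume a: "m < 4" "m' < 4" "(x + m) mod 4 = (x + m') mod 4"
  have "(x mod 4 + m) mod 4 = (x mod 4 + m') mod 4" using a(3) by (simp add: mod_add_left_eq)
  moreover have "x mod 4 < 4" by simp
  ultimately show ?thesis using a(1,2)
    apply -
    apply (drule less4)+
    apply (elim disjE)
    apply simp_all
    done
qed

theorem theorem2:
  fixes a b c d :: nat
  assumes "a < 4" "b < 4" "c < 4" "d < 4"
  shows "oneway_proj_LOCC_discr {bell a 0, bell b 1, bell c 2, bell d 3} \<and>
         oneway_proj_LOCC_discr {bell 0 a, bell 1 b, bell 2 c, bell 3 d}"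
proof
  have h1: "u = w" if H: "x < 4" "y < 4" "u \<in> {bell a 0, bell b 1, bell c 2, bell d 3}"
      "w \<in> {bell a 0, bell b 1, bell c 2, bell d 3}"
      "prob_AB (proj (e x)) (proj (e y)) u \<noteq> 0" "prob_AB (proj (e x)) (proj (e y)) w \<noteq> 0"
    for x y u w
  proof -
    let ?L = "[bell a 0, bell b 1, bell c 2, bell d 3]"
    have D: "\<exists>m<4. v = ?L ! m \<and> y = (x + m) mod 4"
      if "v \<in> {bell a 0, bell b 1, bell c 2, bell d 3}" "prob_AB (proj (e x)) (proj (e y)) v \<noteq> 0" for v
    proof -
      have A: "amp (e x) (e y) v \<noteq> 0" using that(2) by (rule prob_proj_nz)
      from that(1) consider "v = ?L ! 0" | "v = ?L ! 1" | "v = ?L ! 2" | "v = ?L ! 3" by auto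
      then show ?thesis
      proof cases
        case 1 then show ?thesis using A amp_e_nz[OF \<open>x < 4\<close> \<open>y < 4\<close>, of a 0] by (intro exI[of _ 0]) simp
      next
        case 2 then show ?thesis using A amp_e_nz[OF \<open>x < 4\<close> \<open>y < 4\<close>, of b 1] by (intro exI[of _ 1]) simp
      next
        case 3 then show ?thesis using A amp_e_nz[OF \<open>x < 4\<close> \<open>y < 4\<close>, of c 2] by (intro exI[of _ 2]) simp
      next
        case 4 then show ?thesis using A amp_e_nz[OF \<open>x < 4\<close> \<open>y < 4\<close>, of d 3] by (intro exI[of _ 3]) simp
      qed
    qed
    obtain m where m: "m < 4" "u = ?L ! m" "y = (x + m) mod 4" using D[OF H(3,5)] by blast
    obtain m' where m': "m' < 4" "w = ?L ! m'" "y = (x + m') mod 4" using D[OF H(4,6)] by blast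
    have "m = m'" using m(1,3) m'(1,3) modcancel by metis
    then show ?thesis using m(2) m'(2) by simp
  qed
  show "oneway_proj_LOCC_discr {bell a 0, bell b 1, bell c 2, bell d 3}"
    unfolding oneway_proj_LOCC_discr_def oneway_A_to_B_def
    apply (rule disjI1)
    apply (rule exI[of _ "{..<4}"], rule exI[of _ "\<lambda>x. proj (e x)"])
    apply (intro conjI e_meas ballI)
    apply (rule exI[of _ "{..<4}"], rule exI[of _ "\<lambda>x. proj (e x)"])
    apply (intro conjI e_meas ballI impI)
    by (rule h1) auto
next
  have h2: "u = w" if H: "x < 4" "y < 4" "u \<in> {bell 0 a, bell 1 b, bell 2 c, bell 3 d}"
      "w \<in> {bell 0 a, bell 1 b, bell 2 c, bell 3 d}"
      "prob_AB (proj (fv y)) (proj (fv x)) u \<noteq> 0" "prob_AB (proj (fv y)) (proj (fv x)) w \<noteq> 0"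
    for x y u w
  proof -
    let ?L = "[bell 0 a, bell 1 b, bell 2 c, bell 3 d]"
    have D: "v = ?L ! ((y + x) mod 4)"
      if "v \<in> {bell 0 a, bell 1 b, bell 2 c, bell 3 d}" "prob_AB (proj (fv y)) (proj (fv x)) v \<noteq> 0" for v
    proof -
      have A: "amp (fv y) (fv x) v \<noteq> 0" using that(2) by (rule prob_proj_nz)
      from that(1) consider "v = ?L ! 0" | "v = ?L ! 1" | "v = ?L ! 2" | "v = ?L ! 3" by auto
      then show ?thesis
      proof cases
        case 1 then show ?thesis using A amp_fv_nz[of 0 a y x] assms H(1,2) by simp
      next
        case 2 then show ?thesis using A amp_fv_nz[of 1 b y x] assms H(1,2) by simp
      next
        case 3 then show ?thesis using A amp_fv_nz[of 2 c y x] assms H(1,2) by simp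
      next
        case 4 then show ?thesis using A amp_fv_nz[of 3 d y x] assms H(1,2) by simp
      qed
    qed
    show ?thesis using D[OF H(3,5)] D[OF H(4,6)] by simp
  qed
  show "oneway_proj_LOCC_discr {bell 0 a, bell 1 b, bell 2 c, bell 3 d}"
    unfolding oneway_proj_LOCC_discr_def oneway_B_to_A_def
    apply (rule disjI2)
    apply (rule exI[of _ "{..<4}"], rule exI[of _ "\<lambda>x. proj (fv x)"])
    apply (intro conjI ballI)
     apply (rule proj_meas, rule fv_norm, assumption, rule fv_compl, assumption+)
    apply (rule exI[of _ "{..<4}"], rule exI[of _ "\<lambda>x. proj (fv x)"])
    apply (intro conjI ballI impI)
     apply (rule proj_meas, rule fv_norm, assumption, rule fv_compl, assumption+)
    by (rule h2) auto
qed
end
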